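(* There exists a countable family $\mathcal{F}$ of $1$-Lipschitz functions $2^\omega\to 2^\omega$ and an uncountable set $X\subseteq 2^\omega$ such that $X\times X$ is covered by $\mathcal{F}$.
   Context: $2^\omega$ is the Cantor set of all functions $\omega\to\{0,1\}$, equipped with the metric $d(x,y)=2^{-k}$ for $x\neq y$, where $k$ is the smallest natural number with $x\restriction k\neq y\restriction k$ (and $d(x,x)=0$). A function $f$ is $1$-Lipschitz if $d(f(x),f(y))\le d(x,y)$ for all $x,y$. A set $M\subseteq 2^\omega\times 2^\omega$ is covered by a family of functions $\mathcal{F}$ if for every $(x,y)\in M$ there is $f\in\mathcal{F}$ such that either $y=f(x)$ or $x=f(y)$. *)

theory Defs
  imports Complex_Main "HOL-Library.Countable_Set"
begin

type_synonym cantor = "nat \<Rightarrow> bool"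

text \<open>The metric d(x,y) = 2^(-k), k least with x|k \<noteq> y|k, i.e. k = (least n with x n \<noteq> y n) + 1.\<close>
definition cantor_dist :: "cantor \<Rightarrow> cantor \<Rightarrow> real" where
  "cantor_dist x y = (if x = y then 0
     else (1/2) ^ (LEAST k. (\<lambda>i. if i < k then x i else False) \<noteq> (\<lambda>i. if i < k then y i else False)))"

definition lipschitz1 :: "(cantor \<Rightarrow> cantor) \<Rightarrow> bool" where
  "lipschitz1 f \<longleftrightarrow> (\<forall>x y. cantor_dist (f x) (f y) \<le> cantor_dist x y)"

definition covered_by :: "(cantor \<times> cantor) set \<Rightarrow> (cantor \<Rightarrow> cantor) set \<Rightarrow> bool" where
  "covered_by M F \<longleftrightarrow> (\<forall>(x, y) \<in> M. \<exists>f \<in> F. y = f x \<or> x = f y)"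

end

theory Submission
  imports Defs "HOL-Library.Discrete_Functions"
begin

lemma dist_eq:
  assumes "x \<noteq> y"
  shows "cantor_dist x y = (1/2) ^ Suc (LEAST i. x i \<noteq> y i)"
proof -
  define m where "m = (LEAST i. x i \<noteq> y i)"
  have ex: "\<exists>i. x i \<noteq> y i" using assms by auto
  have m1: "x m \<noteq> y m" unfolding m_def by (rule LeastI_ex[OF ex])
  have m2: "\<And>i. i < m \<Longrightarrow> x i = y i" unfolding m_def using not_less_Least by blast
  have "(LEAST k. (\<lambda>i. if i < k then x i else False) \<noteq> (\<lambda>i. if i < k then y i else False)) = Suc m"
  proof (rule Least_equality)
    show "(\<lambda>i. if i < Suc m then x i else False) \<noteq> (\<lambda>i. if i < Suc m then y i else False)"
    proof
      assume "(\<lambda>i. if i < Suc m then x i else False) = (\<lambda>i. if i < Suc m then y i else False)"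
      then have "(if m < Suc m then x m else False) = (if m < Suc m then y m else False)" by metis
      with m1 show False by simp
    qed
  next
    fix k assume "(\<lambda>i. if i < k then x i else False) \<noteq> (\<lambda>i. if i < k then y i else False)"
    then obtain i where "i < k" "x i \<noteq> y i" by (auto split: if_splits)
    then show "Suc m \<le> k" using m2 by (meson Suc_leI le_less_trans not_less)
  qed
  then show ?thesis using assms unfolding cantor_dist_def m_def by simp
qed

lemma lip_crit:
  assumes "\<And>x y n. (\<forall>i<n. x i = y i) \<Longrightarrow> (\<forall>i<n. f x i = f y i)"
  shows "lipschitz1 f"
  unfolding lipschitz1_def
proof (intro allI)
  fix x y
  show "cantor_dist (f x) (f y) \<le> cantor_dist x y"
  proof (cases "f x = f y")
    case True
    then show ?thesis using assms unfolding cantor_dist_def by auto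
  next
    case False
    then have xy: "x \<noteq> y" by auto
    define m where "m = (LEAST i. x i \<noteq> y i)"
    have m2: "\<forall>i<m. x i = y i" unfolding m_def using not_less_Least by blast
    then have fm: "\<forall>i<m. f x i = f y i" using assms by blast
    define m' where "m' = (LEAST i. f x i \<noteq> f y i)"
    have "\<exists>i. f x i \<noteq> f y i" using False by auto
    then have "f x m' \<noteq> f y m'" unfolding m'_def by (rule LeastI_ex)
    then have "m \<le> m'" using fm by (meson not_less)
    then have "((1::real)/2) ^ Suc m' \<le> (1/2) ^ Suc m" by (intro power_decreasing) auto
    then show ?thesis unfolding dist_eq[OF False] dist_eq[OF xy] m_def[symmetric] m'_def[symmetric] .
  qed
qed

definition ep :: "nat \<Rightarrow> nat" where "ep t = floor_log t"

lemma ep_le: "0 < t \<Longrightarrow> 2 ^ ep t \<le> t"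
  unfolding ep_def by (rule floor_log_exp2_le)

lemma ep_gt: "t < 2 * 2 ^ ep t"
  unfolding ep_def by (rule floor_log_exp2_gt)

lemma ep_blk: "ep (2 ^ e + j) = e" if "j < 2 ^ e"
  unfolding ep_def using that by (intro floor_log_eqI) auto

definition blk :: "cantor \<Rightarrow> nat \<Rightarrow> bool list" where
  "blk x e = map (\<lambda>j. x (2 ^ e + j)) [0..<2 ^ e]"

lemma length_blk [simp]: "length (blk x e) = 2 ^ e"
  by (simp add: blk_def)

lemma nth_blk: "j < 2 ^ e \<Longrightarrow> blk x e ! j = x (2 ^ e + j)"
  by (simp add: blk_def)

lemma blk_eq:
  assumes "\<forall>i<n. z i = y i" "2 ^ Suc e \<le> n"
  shows "blk z e = blk y e"
proof -
  have "\<And>j. j < 2 ^ e \<Longrightarrow> z (2 ^ e + j) = y (2 ^ e + j)"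
    using assms by auto
  then show ?thesis unfolding blk_def by simp
qed

definition strip :: "bool list \<Rightarrow> bool list" where
  "strip l = rev (dropWhile (\<lambda>b. \<not> b) (rev l))"

lemma dropWhile_rep: "dropWhile (\<lambda>b. \<not> b) (replicate n False @ r) = dropWhile (\<lambda>b. \<not> b) r"
  by (induction n) auto

lemma strip_app_rep: "strip (l @ replicate n False) = strip l"
  unfolding strip_def by (simp add: dropWhile_rep)

lemma strip_decomp: "\<exists>n. l = strip l @ replicate n False"
proof -
  have 1: "rev l = takeWhile (\<lambda>b. \<not> b) (rev l) @ dropWhile (\<lambda>b. \<not> b) (rev l)"
    by simp
  have "\<forall>b\<in>set (takeWhile (\<lambda>b. \<not> b) (rev l)). b = False"
    by (auto dest: set_takeWhileD)
  then have 2: "takeWhile (\<lambda>b. \<not> b) (rev l) = replicate (length (takeWhile (\<lambda>b. \<not> b) (rev l))) False"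
    by (simp add: replicate_length_same)
  have "l = rev (rev l)" by simp
  also have "\<dots> = strip l @ rev (takeWhile (\<lambda>b. \<not> b) (rev l))"
    unfolding strip_def by (metis rev_append takeWhile_dropWhile_id)
  also have "rev (takeWhile (\<lambda>b. \<not> b) (rev l)) = replicate (length (takeWhile (\<lambda>b. \<not> b) (rev l))) False"
    by (subst 2) simp
  finally show ?thesis by blast
qed

lemma length_strip: "length (strip l) \<le> length l"
  unfolding strip_def using length_dropWhile_le[of _ "rev l"] by simp

lemma strip_nth: "j < length l \<Longrightarrow> (j < length (strip l) \<and> strip l ! j) = l ! j"
proof -
  assume j: "j < length l"
  obtain n where n: "l = strip l @ replicate n False" using strip_decomp by blast
  show ?thesis
  proof (cases "j < length (strip l)")
    case True
    then show ?thesis by (subst (3) n) (simp add: nth_append)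
  next
    case False
    have "l ! j = (strip l @ replicate n False) ! j" using n by simp
    also have "\<dots> = False" using False j n
      by (metis add_diff_inverse_nat length_append length_replicate nat_add_left_cancel_less nth_append_length_plus nth_replicate)
    finally show ?thesis using False by simp
  qed
qed

definition lam :: "cantor \<Rightarrow> nat \<Rightarrow> nat" where
  "lam x e = length (strip (blk x e))"

definition good :: "cantor \<Rightarrow> bool" where
  "good x \<longleftrightarrow> (\<forall>m. eventually (\<lambda>e. m * lam x e \<le> 2 ^ e) sequentially)"

fun dbl :: "bool list \<Rightarrow> bool list" where
  "dbl [] = [False, False]"
| "dbl (b # bs) = True # b # dbl bs"

fun encL :: "bool list list \<Rightarrow> bool list" where
  "encL [] = [False, True]"
| "encL (L # Ls) = dbl L @ encL Ls"

fun dec :: "bool list \<Rightarrow> bool list list" where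
  "dec (True # b # r) = (case dec r of [] \<Rightarrow> [] | L # Ls \<Rightarrow> (b # L) # Ls)"
| "dec (False # False # r) = [] # dec r"
| "dec _ = []"

lemma dec_dbl: "dec (dbl L @ r) = L # dec r"
  by (induction L) auto

lemma dec_encL: "dec (encL Ls @ r) = Ls"
  by (induction Ls) (auto simp: dec_dbl)

lemma length_dbl: "length (dbl L) = 2 * length L + 2"
  by (induction L) auto

lemma length_encL: "length (encL Ls) = sum_list (map (\<lambda>L. 2 * length L + 2) Ls) + 2"
  by (induction Ls) (auto simp: length_dbl)

definition dcd :: "nat \<Rightarrow> bool list \<Rightarrow> cantor \<Rightarrow> cantor" where
  "dcd k s z t = (if t < length s then s ! t else
     0 < t \<and> 0 < ep t \<and> k < length (dec (blk z (ep t - 1))) \<and>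
     t - 2 ^ ep t < length (dec (blk z (ep t - 1)) ! k) \<and>
     dec (blk z (ep t - 1)) ! k ! (t - 2 ^ ep t))"

lemma dcd_lip: "lipschitz1 (dcd k s)"
proof (rule lip_crit)
  fix x y :: cantor and n
  assume xy: "\<forall>i<n. x i = y i"
  show "\<forall>i<n. dcd k s x i = dcd k s y i"
  proof (intro allI impI)
    fix t assume t: "t < n"
    show "dcd k s x t = dcd k s y t"
    proof (cases "0 < t \<and> 0 < ep t")
      case True
      then have "2 ^ Suc (ep t - 1) \<le> n" using ep_le[of t] t by simp
      then have "blk x (ep t - 1) = blk y (ep t - 1)" using blk_eq xy by blast
      then show ?thesis unfolding dcd_def by simp
    next
      case False
      then show ?thesis unfolding dcd_def by auto
    qed
  qed
qed

definition Pk :: "(nat \<Rightarrow> cantor) \<Rightarrow> nat \<Rightarrow> nat \<Rightarrow> bool" where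
  "Pk a k e \<longleftrightarrow> (\<forall>j\<in>{..k}. (k + 2)^2 * (2 * lam (a j) (Suc e) + 2) \<le> 2 ^ e)"

lemma ev_pow: "eventually (\<lambda>e. (c::nat) \<le> 2 ^ e) sequentially"
  unfolding eventually_sequentially
  by (rule exI[of _ c]) (meson less_exp less_imp_le_nat order_trans)

lemma ev_Pk:
  assumes "\<forall>j. good (a j)"
  shows "eventually (Pk a k) sequentially"
proof -
  define A where "A = (k + 2)^2"
  have "\<forall>j\<in>{..k}. eventually (\<lambda>e. A * (2 * lam (a j) (Suc e) + 2) \<le> 2 ^ e) sequentially"
  proof
    fix j
    have "eventually (\<lambda>e. (8 * A) * lam (a j) e \<le> 2 ^ e) sequentially"
      using assms unfolding good_def by blast
    then have e1: "eventually (\<lambda>e. (8 * A) * lam (a j) (Suc e) \<le> 2 ^ Suc e) sequentially"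
      by (rule iffD2[OF eventually_sequentially_Suc[of "\<lambda>e. (8 * A) * lam (a j) e \<le> 2 ^ e"]])
    have e2: "eventually (\<lambda>e. 4 * A \<le> 2 ^ e) sequentially" by (rule ev_pow)
    show "eventually (\<lambda>e. A * (2 * lam (a j) (Suc e) + 2) \<le> 2 ^ e) sequentially"
      using e1 e2
    proof eventually_elim
      case (elim e)
      define l where "l = lam (a j) (Suc e)"
      define AL where "AL = A * l"
      have "8 * AL \<le> 2 * 2 ^ e" using elim(1) unfolding AL_def l_def by (simp add: mult.assoc)
      moreover have "A * (2 * l + 2) = 2 * AL + 2 * A" unfolding AL_def by (simp add: algebra_simps)
      ultimately show ?case using elim(2) unfolding l_def by linarith
    qed
  qed
  then show ?thesis unfolding Pk_def A_def
    by (rule eventually_ball_finite[rotated]) simp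
qed

lemma ex_Pk:
  assumes "\<forall>j. good (a j)"
  shows "\<exists>e0. b < e0 \<and> (\<forall>e\<ge>e0. Pk a k e)"
proof -
  obtain N where "\<forall>e\<ge>N. Pk a k e" using ev_Pk[OF assms, of k] unfolding eventually_sequentially by blast
  then show ?thesis by (intro exI[of _ "max N (Suc b)"]) auto
qed

fun gg :: "(nat \<Rightarrow> cantor) \<Rightarrow> nat \<Rightarrow> nat" where
  "gg a 0 = (SOME e0. 3 < e0 \<and> (\<forall>e\<ge>e0. Pk a 0 e))"
| "gg a (Suc k) = (SOME e0. gg a k < e0 \<and> (\<forall>e\<ge>e0. Pk a (Suc k) e))"

lemma gg_props:
  assumes "\<forall>j. good (a j)"
  shows "3 < gg a 0" "gg a k < gg a (Suc k)" "\<forall>e\<ge>gg a k. Pk a k e"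
proof -
  have 0: "3 < gg a 0 \<and> (\<forall>e\<ge>gg a 0. Pk a 0 e)"
    unfolding gg.simps by (rule someI_ex) (rule ex_Pk[OF assms])
  have S: "gg a k < gg a (Suc k) \<and> (\<forall>e\<ge>gg a (Suc k). Pk a (Suc k) e)" for k
    unfolding gg.simps(2) by (rule someI_ex) (rule ex_Pk[OF assms])
  show "3 < gg a 0" using 0 by simp
  show "gg a k < gg a (Suc k)" using S by simp
  show "\<forall>e\<ge>gg a k. Pk a k e" using 0 S by (cases k) auto
qed

lemma gg_mono:
  assumes "\<forall>j. good (a j)"
  shows "strict_mono (gg a)"
  using gg_props(2)[OF assms] by (simp add: strict_mono_Suc_iff)

lemma gg_ge:
  assumes "\<forall>j. good (a j)"
  shows "k + 4 \<le> gg a k"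
proof (induction k)
  case 0 then show ?case using gg_props(1)[OF assms] by simp
next
  case (Suc k) then show ?case using gg_props(2)[OF assms, of k] by simp
qed

definition KK :: "(nat \<Rightarrow> cantor) \<Rightarrow> nat \<Rightarrow> nat" where
  "KK a e = (LEAST k. e < gg a k)"

lemma KK_iff:
  assumes "\<forall>j. good (a j)"
  shows "k < KK a e \<longleftrightarrow> gg a k \<le> e"
proof -
  have ex: "e < gg a e" using gg_ge[OF assms, of e] by simp
  have L1: "e < gg a (KK a e)" unfolding KK_def by (rule LeastI[of "\<lambda>k. e < gg a k", OF ex])
  have L2: "\<And>k. e < gg a k \<Longrightarrow> KK a e \<le> k" unfolding KK_def by (rule Least_le)
  have mono: "\<And>i j. i \<le> j \<Longrightarrow> gg a i \<le> gg a j"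
    using gg_mono[OF assms] by (simp add: strict_mono_less_eq)
  show ?thesis
  proof
    assume "k < KK a e" then show "gg a k \<le> e" using L2 by (meson not_le)
  next
    assume "gg a k \<le> e"
    then show "k < KK a e" using L1 mono by (meson le_trans not_le)
  qed
qed

definition Ls :: "(nat \<Rightarrow> cantor) \<Rightarrow> cantor \<Rightarrow> nat \<Rightarrow> bool list list" where
  "Ls a w e = [w (e - 4)] # map (\<lambda>k. strip (blk (a k) (Suc e))) [0..<KK a e]"

definition cc :: "(nat \<Rightarrow> cantor) \<Rightarrow> cantor \<Rightarrow> nat \<Rightarrow> bool list" where
  "cc a w e = (if e < 4 then [] else encL (Ls a w e))"

definition zz :: "(nat \<Rightarrow> cantor) \<Rightarrow> cantor \<Rightarrow> cantor" where
  "zz a w t = (0 < t \<and> t - 2 ^ ep t < length (cc a w (ep t)) \<and> cc a w (ep t) ! (t - 2 ^ ep t))"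

definition SS :: "(nat \<Rightarrow> cantor) \<Rightarrow> nat \<Rightarrow> nat" where
  "SS a e = sum_list (map (\<lambda>k. 2 * lam (a k) (Suc e) + 2) [0..<KK a e])"

lemma sum_bound:
  assumes "\<forall>k<K. c * f k \<le> (B::nat)"
  shows "c * sum_list (map f [0..<K]) \<le> K * B"
  using assms
proof (induction K)
  case 0 then show ?case by simp
next
  case (Suc K)
  then have "c * sum_list (map f [0..<K]) \<le> K * B" by simp
  moreover have "c * f K \<le> B" using Suc.prems by simp
  ultimately show ?case by (simp add: algebra_simps)
qed

lemma length_cc:
  "4 \<le> e \<Longrightarrow> length (cc a w e) = 6 + SS a e"
  unfolding cc_def Ls_def SS_def
  by (simp add: length_encL lam_def o_def)

lemma SS_bound:
  assumes "\<forall>j. good (a j)"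
  shows "(KK a e + 1) * SS a e \<le> 2 ^ e"
proof (cases "KK a e = 0")
  case True then show ?thesis by (simp add: SS_def)
next
  case False
  define K where "K = KK a e"
  have "gg a (K - 1) \<le> e" using KK_iff[OF assms, of "K - 1" e] False unfolding K_def by simp
  then have P: "Pk a (K - 1) e" using gg_props(3)[OF assms] by blast
  have K1: "K - 1 + 2 = K + 1" using False unfolding K_def by simp
  have "\<forall>k<K. (K + 1)^2 * (2 * lam (a k) (Suc e) + 2) \<le> 2 ^ e"
    using P K1 unfolding Pk_def by auto
  then have "(K + 1)^2 * SS a e \<le> K * 2 ^ e"
    unfolding SS_def K_def[symmetric] by (rule sum_bound)
  also have "\<dots> \<le> (K + 1) * 2 ^ e" by simp
  finally have h: "(K + 1)^2 * SS a e \<le> (K + 1) * 2 ^ e" .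
  have "(K + 1) * ((K + 1) * SS a e) \<le> (K + 1) * 2 ^ e" using h by (simp only: power2_eq_square mult.assoc)
  then have "(K + 1) * SS a e \<le> 2 ^ e" using mult_le_cancel1[of "K + 1" "(K + 1) * SS a e" "2 ^ e"] by (simp only: mult_le_cancel1)
  then show ?thesis unfolding K_def by simp
qed

lemma cc_fit:
  assumes "\<forall>j. good (a j)"
  shows "length (cc a w e) \<le> 2 ^ e"
proof (cases "e < 4")
  case True then show ?thesis by (simp add: cc_def)
next
  case False
  have p: "16 \<le> (2::nat) ^ e"
  proof -
    have "(2::nat) ^ 4 \<le> 2 ^ e" using False by (intro power_increasing) auto
    then show ?thesis by simp
  qed
  have b: "(KK a e + 1) * SS a e \<le> 2 ^ e" by (rule SS_bound[OF assms])
  have "2 * SS a e \<le> 2 ^ e"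
  proof (cases "KK a e = 0")
    case True then show ?thesis by (simp add: SS_def)
  next
    case False
    then have "2 * SS a e \<le> (KK a e + 1) * SS a e" by (intro mult_le_mono1) simp
    then show ?thesis using b by linarith
  qed
  then show ?thesis using length_cc[of e a w] False p by linarith
qed

lemma blk_zz:
  assumes "\<forall>j. good (a j)"
  shows "blk (zz a w) e = cc a w e @ replicate (2 ^ e - length (cc a w e)) False"
proof (rule nth_equalityI)
  show "length (blk (zz a w) e) = length (cc a w e @ replicate (2 ^ e - length (cc a w e)) False)"
    using cc_fit[OF assms, of w e] by simp
next
  fix j assume "j < length (blk (zz a w) e)"
  then have j: "j < 2 ^ e" by simp
  have "blk (zz a w) e ! j = zz a w (2 ^ e + j)" using nth_blk[OF j] .
  also have "\<dots> = (j < length (cc a w e) \<and> cc a w e ! j)"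
    unfolding zz_def ep_blk[OF j] by simp
  also have "\<dots> = (cc a w e @ replicate (2 ^ e - length (cc a w e)) False) ! j"
    using j by (auto simp: nth_append)
  finally show "blk (zz a w) e ! j = (cc a w e @ replicate (2 ^ e - length (cc a w e)) False) ! j" .
qed

lemma dec_blk_zz:
  assumes "\<forall>j. good (a j)" "4 \<le> e"
  shows "dec (blk (zz a w) e) = Ls a w e"
  using assms by (simp add: blk_zz cc_def dec_encL)

lemma lam_zz:
  assumes "\<forall>j. good (a j)"
  shows "lam (zz a w) e \<le> length (cc a w e)"
  unfolding lam_def blk_zz[OF assms] strip_app_rep by (rule length_strip)

lemma good_zz:
  assumes "\<forall>j. good (a j)"
  shows "good (zz a w)"
  unfolding good_def
proof
  fix m
  show "eventually (\<lambda>e. m * lam (zz a w) e \<le> 2 ^ e) sequentially"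
    unfolding eventually_sequentially
  proof (intro exI allI impI)
    fix e assume e: "max (gg a (2 * m)) (12 * m) \<le> e"
    then have e4: "4 \<le> e" using gg_ge[OF assms, of "2*m"] by simp
    have "2 * m < KK a e" using KK_iff[OF assms] e by simp
    then have "2 * m * SS a e \<le> (KK a e + 1) * SS a e" by (intro mult_le_mono1) simp
    then have s: "2 * (m * SS a e) \<le> 2 ^ e" using SS_bound[OF assms, of e] by simp
    have "12 * m \<le> 2 ^ e" using e by (meson le_trans less_exp less_imp_le_nat max.boundedE)
    moreover have "m * lam (zz a w) e \<le> m * (6 + SS a e)"
      using lam_zz[OF assms, of w e] length_cc[OF e4] by simp
    moreover have "m * (6 + SS a e) = 6 * m + m * SS a e" by (simp add: algebra_simps)
    ultimately show "m * lam (zz a w) e \<le> 2 ^ e" using s by linarith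
  qed
qed

lemma dcd_zz:
  assumes "\<forall>j. good (a j)"
  shows "dcd (Suc k) (map (a k) [0..<2 ^ Suc (gg a k)]) (zz a w) = a k"
proof
  fix t
  define s where "s = map (a k) [0..<2 ^ Suc (gg a k)]"
  show "dcd (Suc k) (map (a k) [0..<2 ^ Suc (gg a k)]) (zz a w) t = a k t"
  proof (cases "t < 2 ^ Suc (gg a k)")
    case True
    then show ?thesis unfolding dcd_def by simp
  next
    case False
    have t0: "0 < t" using False by (metis not_less not_less0 zero_less_power pos2 less_le_trans)
    have hi: "t < 2 ^ Suc (ep t)" using ep_gt[of t] by simp
    have "2 ^ Suc (gg a k) < (2::nat) ^ Suc (ep t)" using False hi by linarith
    then have "Suc (gg a k) < Suc (ep t)" using power_less_imp_less_exp[of 2] by simp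
    then have ge: "gg a k \<le> ep t - 1" "0 < ep t" by auto
    define e where "e = ep t - 1"
    have Ee: "ep t = Suc e" using ge(2) unfolding e_def by simp
    have e4: "4 \<le> e" using ge(1) gg_ge[OF assms, of k] unfolding e_def by simp
    have kK: "k < KK a e" using KK_iff[OF assms] ge(1) unfolding e_def by simp
    have D: "dec (blk (zz a w) (ep t - 1)) = Ls a w e" using dec_blk_zz[OF assms e4] unfolding e_def .
    have len: "Suc k < length (Ls a w e)" using kK by (simp add: Ls_def)
    have nth: "Ls a w e ! Suc k = strip (blk (a k) (ep t))" using kK Ee by (simp add: Ls_def)
    define j where "j = t - 2 ^ ep t"
    have j: "j < 2 ^ ep t" "t = 2 ^ ep t + j" using ep_le[OF t0] ep_gt[of t] unfolding j_def by auto
    have "dcd (Suc k) s (zz a w) t = (j < length (strip (blk (a k) (ep t))) \<and> strip (blk (a k) (ep t)) ! j)"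
      using False t0 ge(2) D len nth unfolding dcd_def s_def j_def by simp
    also have "\<dots> = blk (a k) (ep t) ! j" using j(1) by (intro strip_nth) simp
    also have "\<dots> = a k t" using nth_blk[OF j(1)] j(2) by simp
    finally show ?thesis unfolding s_def .
  qed
qed

lemma zz_inj:
  assumes "\<forall>j. good (a j)"
  shows "inj (zz a)"
proof
  fix w w' assume eq: "zz a w = zz a w'"
  show "w = w'"
  proof
    fix n
    have "Ls a w (n + 4) = Ls a w' (n + 4)"
      using dec_blk_zz[OF assms, of "n + 4" w] dec_blk_zz[OF assms, of "n + 4" w'] eq by simp
    then show "w n = w' n" unfolding Ls_def by simp
  qed
qed

definition FF :: "(cantor \<Rightarrow> cantor) set" where
  "FF = insert id (range (\<lambda>(k, s). dcd k s))"

definition PP :: "cantor set \<Rightarrow> bool" where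
  "PP X \<longleftrightarrow> (\<forall>x\<in>X. \<forall>y\<in>X. \<exists>f\<in>FF. y = f x \<or> x = f y)"

lemma cantor_uncountable: "uncountable (UNIV :: cantor set)"
proof
  assume "countable (UNIV :: cantor set)"
  then obtain h :: "nat \<Rightarrow> cantor" where h: "range h = UNIV"
    using range_from_nat_into[OF UNIV_not_empty] by blast
  have "(\<lambda>n. \<not> h n n) \<in> range h" using h by simp
  then obtain k where hk: "(\<lambda>n. \<not> h n n) = h k" by (rule rangeE)
  have "(\<not> h k k) = h k k" using fun_cong[OF hk, of k] by simp
  then show False by (cases "h k k") auto
qed

lemma extend:
  assumes "countable X" "PP X" "X \<subseteq> Collect good"
  shows "\<exists>z. good z \<and> z \<notin> X \<and> PP (insert z X)"
proof (cases "X = {}")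
  case True
  have dw: "dropWhile Not (map (\<lambda>j. False) xs) = []" for xs :: "nat list" by (induction xs) auto
  have "good (\<lambda>_. False)" unfolding good_def lam_def blk_def strip_def by (simp add: dw rev_map)
  then show ?thesis using True unfolding PP_def FF_def by auto
next
  case False
  define a where "a = from_nat_into X"
  have aX: "a k \<in> X" for k unfolding a_def using False by (rule from_nat_into)
  have ga: "\<forall>j. good (a j)" using aX assms(3) by blast
  have "uncountable (range (zz a))"
    using cantor_uncountable zz_inj[OF ga] countable_image_inj_on by blast
  then obtain w where w: "zz a w \<notin> X"
  proof -
    have "\<not> range (zz a) \<subseteq> X" using assms(1) \<open>uncountable (range (zz a))\<close> countable_subset by blast
    then show ?thesis using that by blast
  qed
  define z where "z = zz a w"
  have cx: "\<exists>f\<in>FF. x = f z" if xX: "x \<in> X" for x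
  proof -
    obtain k where "a k = x" using from_nat_into_surj[OF assms(1) xX] unfolding a_def by blast
    moreover have "dcd (Suc k) (map (a k) [0..<2 ^ Suc (gg a k)]) \<in> FF"
      unfolding FF_def by (intro insertI2) (rule image_eqI[of _ _ "(Suc k, map (a k) [0..<2 ^ Suc (gg a k)])"], auto)
    ultimately show ?thesis using dcd_zz[OF ga, of k w] unfolding z_def by metis
  qed
  have "PP (insert z X)"
    unfolding PP_def
  proof (intro ballI)
    fix x y assume x: "x \<in> insert z X" and y: "y \<in> insert z X"
    show "\<exists>f\<in>FF. y = f x \<or> x = f y"
    proof (cases "x = z")
      case True
      then show ?thesis using y cx unfolding FF_def by auto
    next
      case xn: False
      then have xX: "x \<in> X" using x by auto
      show ?thesis
      proof (cases "y = z")
        case True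
        then show ?thesis using cx[OF xX] by auto
      next
        case False
        then show ?thesis using xX y assms(2) unfolding PP_def by auto
      qed
    qed
  qed
  then show ?thesis using w good_zz[OF ga, of w] unfolding z_def by blast
qed

theorem theorem3p1:
  shows "\<exists>F X. countable F \<and> (\<forall>f \<in> F. lipschitz1 f) \<and> uncountable X \<and> covered_by (X \<times> X) F"
proof -
  define A where "A = {X. X \<subseteq> Collect good \<and> PP X}"
  have "\<forall>C\<in>chains A. \<Union>C \<in> A"
  proof
    fix C assume C: "C \<in> chains A"
    show "\<Union>C \<in> A"
      unfolding A_def
    proof (intro CollectI conjI)
      show "\<Union>C \<subseteq> Collect good" using C unfolding chains_def A_def by blast
      show "PP (\<Union>C)"
        unfolding PP_def
      proof (intro ballI)
        fix x y assume "x \<in> \<Union>C" "y \<in> \<Union>C"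
        then obtain X Y where XY: "X \<in> C" "Y \<in> C" "x \<in> X" "y \<in> Y" by auto
        then have "X \<subseteq> Y \<or> Y \<subseteq> X" using C unfolding chains_def chain_subset_def by blast
        moreover have "PP X" "PP Y" using XY C unfolding chains_def A_def by auto
        ultimately show "\<exists>f\<in>FF. y = f x \<or> x = f y" using XY unfolding PP_def by blast
      qed
    qed
  qed
  then obtain M where M: "M \<in> A" "\<forall>X\<in>A. M \<subseteq> X \<longrightarrow> X = M" using Zorn_Lemma by blast
  have unc: "uncountable M"
  proof
    assume "countable M"
    then obtain z where "good z" "z \<notin> M" "PP (insert z M)"
      using extend M(1) unfolding A_def by blast
    moreover have "insert z M \<in> A" using calculation M(1) unfolding A_def by auto
    ultimately show False using M(2) by blast
  qed
  have "countable FF" unfolding FF_def by simp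
  moreover have "\<forall>f\<in>FF. lipschitz1 f"
    unfolding FF_def using dcd_lip by (auto intro: lip_crit)
  moreover have "covered_by (M \<times> M) FF"
    using M(1) unfolding A_def PP_def covered_by_def by auto
  ultimately show ?thesis using unc by blast
qed

end
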